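(* Let $G=(V,E)$ be a simple undirected graph that is not complete. Then (a) $\textnormal{conv}(X(G))\subseteq\mathbb{R}^{E^c}$ is full-dimensional, and (b) for every $f\in E^c$ the inequality $x_f\le 1$ is facet-defining for $\textnormal{conv}(X(G))$.
   Context: $E^c=\binom{V}{2}\setminus E$. For $x\in\{0,1\}^{E^c}$, $E(x)=\{f\in E^c:x_f=1\}$, and $X(G)=\{x\in\{0,1\}^{E^c}:(V,E\cup E(x))\text{ is chordal}\}$, where a graph is chordal if every cycle with at least four vertices has a chord (an edge joining two nonconsecutive vertices of the cycle). *)

theory Defs
  imports "HOL-Analysis.Analysis"
begin

text \<open>Simple graphs on the finite vertex set UNIV of a finite type 'v;
  edges are 2-element subsets of vertices.\<close>

definition simple_graph :: "'v set set \<Rightarrow> bool" where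
  "simple_graph E \<longleftrightarrow> (\<forall>e\<in>E. card e = 2)"

definition all_pairs :: "'v set set" where
  "all_pairs = {e. card e = 2}"

definition complete_graph :: "'v set set \<Rightarrow> bool" where
  "complete_graph E \<longleftrightarrow> E = all_pairs"

definition non_edges :: "'v set set \<Rightarrow> 'v set set" where
  "non_edges E = all_pairs - E"

definition is_cycle :: "'v set set \<Rightarrow> 'v list \<Rightarrow> bool" where
  "is_cycle F vs \<longleftrightarrow> distinct vs \<and> length vs \<ge> 3 \<and>
     (\<forall>i < length vs. {vs ! i, vs ! ((i + 1) mod length vs)} \<in> F)"

definition has_chord :: "'v set set \<Rightarrow> 'v list \<Rightarrow> bool" where
  "has_chord F vs \<longleftrightarrow> (\<exists>i < length vs. \<exists>j < length vs. i \<noteq> j \<and>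
     j \<noteq> (i + 1) mod length vs \<and> i \<noteq> (j + 1) mod length vs \<and>
     {vs ! i, vs ! j} \<in> F)"

definition chordal :: "'v set set \<Rightarrow> bool" where
  "chordal F \<longleftrightarrow> (\<forall>vs. is_cycle F vs \<and> length vs \<ge> 4 \<longrightarrow> has_chord F vs)"

text \<open>Points of R^{E^c} are represented as vectors in real^('v set) that vanish
  outside E^c.\<close>
definition X_set :: "('v::finite) set set \<Rightarrow> (real ^ ('v set)) set" where
  "X_set E = {x. (\<forall>e. e \<notin> non_edges E \<longrightarrow> x $ e = 0) \<and>
                 (\<forall>e\<in>non_edges E. x $ e = 0 \<or> x $ e = 1) \<and>
                 chordal (E \<union> {e \<in> non_edges E. x $ e = 1})}"

definition full_dim_in :: "(real ^ ('v::finite set)) set \<Rightarrow> 'v set set \<Rightarrow> bool" where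
  "full_dim_in P I \<longleftrightarrow> aff_dim P = int (card I)"

definition coord_le_one_facet_defining :: "'i::finite \<Rightarrow> (real ^ 'i) set \<Rightarrow> bool" where
  "coord_le_one_facet_defining f P \<longleftrightarrow>
     (\<forall>x\<in>P. x $ f \<le> 1) \<and> (P \<inter> {x. x $ f = 1}) facet_of P"

end

theory Submission
  imports Defs
begin

lemma chordal_big:
  assumes "all_pairs - {f} \<subseteq> F"
  shows "chordal F"
  unfolding chordal_def
proof (intro allI impI)
  fix vs :: "'a list"
  assume h: "is_cycle F vs \<and> 4 \<le> length vs"
  let ?n = "length vs"
  have d: "distinct vs" and n: "?n \<ge> 4" using h by (auto simp: is_cycle_def)
  have vne: "vs \<noteq> []" using n by auto
  have ne02: "vs!0 \<noteq> vs!2" and ne13: "vs!1 \<noteq> vs!3" and ne01: "vs!0 \<noteq> vs!1"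
    and ne03: "vs!0 \<noteq> vs!3"
    using d n nth_eq_iff_index_eq[OF d, of 0 2] nth_eq_iff_index_eq[OF d, of 1 3]
      nth_eq_iff_index_eq[OF d, of 0 1] nth_eq_iff_index_eq[OF d, of 0 3] vne by auto
  have c02: "{vs!0, vs!2} \<in> all_pairs" using ne02 by (simp add: all_pairs_def)
  have c13: "{vs!1, vs!3} \<in> all_pairs" using ne13 by (simp add: all_pairs_def)
  have diff: "{vs!0, vs!2} \<noteq> {vs!1, vs!3}" using ne01 ne03 by (auto simp: doubleton_eq_iff)
  have m1: "(0+1) mod ?n = 1" "(2+1) mod ?n = 3" "(1+1) mod ?n = 2" using n by auto
  have m2: "(3+1) mod ?n \<noteq> 1"
  proof (cases "?n = 4")
    case True then show ?thesis by simp
  next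
    case False then have "?n > 4" using n by simp
    then show ?thesis by simp
  qed
  show "has_chord F vs"
  proof (cases "{vs!0, vs!2} = f")
    case True
    then have "{vs!1, vs!3} \<in> F" using diff c13 assms by auto
    then show ?thesis unfolding has_chord_def
      apply (rule_tac x=1 in exI) using n m1 m2 by (auto intro!: exI[of _ 3])
  next
    case False
    then have "{vs!0, vs!2} \<in> F" using c02 assms by auto
    then show ?thesis unfolding has_chord_def
      apply (rule_tac x=0 in exI) using n m1 by (auto intro!: exI[of _ 2])
  qed
qed

lemma dim_neg_axes:
  fixes M :: "'i::finite set"
  shows "dim ((\<lambda>g. - axis g (1::real)) ` M) = card M"
proof -
  let ?T = "(\<lambda>g. - axis g (1::real)) ` M"
  let ?S = "{x::real^'i. \<forall>i. i \<notin> M \<longrightarrow> x$i = 0}"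
  have up: "dim ?T \<le> card M"
    by (metis card_image_le dim_le_card' finite finite_imageI order_trans)
  have sub: "?S \<subseteq> span ?T"
  proof
    fix x :: "real^'i" assume x: "x \<in> ?S"
    have "x = (\<Sum>i\<in>UNIV. x$i *\<^sub>R axis i 1)"
      by (metis (no_types, lifting) basis_expansion scalar_mult_eq_scaleR sum.cong)
    also have "\<dots> = (\<Sum>i\<in>M. x$i *\<^sub>R axis i 1)"
      using x by (intro sum.mono_neutral_right) auto
    also have "\<dots> = (\<Sum>i\<in>M. (- x$i) *\<^sub>R (- axis i 1))" by simp
    also have "\<dots> \<in> span ?T"
      by (intro span_sum span_mul span_base) auto
    finally show "x \<in> span ?T" .
  qed
  have "dim ?S = card M" using dim_substandard_cart[where 'a=real and d=M] dim_vec_eq[of ?S] by simp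
  then have "card M \<le> dim (span ?T)" using dim_subset[OF sub] by simp
  then show ?thesis using up dim_span by (metis le_antisym)
qed

lemma aff_dim_star:
  fixes M :: "'i::finite set" and c :: "real^'i"
  shows "aff_dim (insert c ((\<lambda>g. c - axis g 1) ` M)) = int (card M)"
proof -
  let ?S = "insert c ((\<lambda>g. c - axis g 1) ` M)"
  have "c \<in> affine hull ?S" by (simp add: hull_inc)
  then have "aff_dim ?S = int (dim ((+) (- c) ` ?S))" by (rule aff_dim_eq_dim)
  also have "(+) (- c) ` ?S = insert 0 ((\<lambda>g. - axis g (1::real)) ` M)"
    by (auto simp: image_image)
  also have "dim \<dots> = dim ((\<lambda>g. - axis g (1::real)) ` M)"
    by (metis dim_span span_insert_0)
  finally show ?thesis by (simp add: dim_neg_axes)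
qed

lemma aff_dim_zero_outside:
  fixes P :: "(real^'i::finite) set"
  assumes "P \<subseteq> {x. \<forall>i. i \<notin> M \<longrightarrow> x$i = 0}"
  shows "aff_dim P \<le> int (card M)"
proof -
  let ?S = "{x::real^'i. \<forall>i. i \<notin> M \<longrightarrow> x$i = 0}"
  have sS: "subspace ?S" by (auto simp: subspace_def)
  have "dim ?S = card M" using dim_substandard_cart[where 'a=real and d=M] dim_vec_eq[of ?S] by simp
  then have "aff_dim ?S = int (card M)" using aff_dim_subspace[OF sS] by simp
  then show ?thesis using aff_dim_subset[OF assms] by simp
qed

theorem theorem1:
  fixes E :: "('v::finite) set set"
  assumes "simple_graph E"
    and "\<not> complete_graph E"
  shows "full_dim_in (convex hull (X_set E)) (non_edges E)
       \<and> (\<forall>f \<in> non_edges E. coord_le_one_facet_defining f (convex hull (X_set E)))"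
proof -
  define N where "N = non_edges E"
  define c :: "real^('v set)" where "c = (\<chi> e. if e \<in> N then 1 else 0)"
  let ?X = "X_set E"
  let ?P = "convex hull ?X"
  have cX: "c \<in> ?X"
    unfolding X_set_def N_def[symmetric]
  proof (intro CollectI conjI)
    show "chordal (E \<union> {e \<in> N. c $ e = 1})"
      by (rule chordal_big[where f="{}"]) (auto simp: c_def N_def non_edges_def)
  qed (auto simp: c_def)
  have cgX: "c - axis g 1 \<in> ?X" if g: "g \<in> N" for g
    unfolding X_set_def N_def[symmetric]
  proof (intro CollectI conjI)
    show "chordal (E \<union> {e \<in> N. (c - axis g 1) $ e = 1})"
      by (rule chordal_big[where f=g]) (auto simp: c_def N_def non_edges_def axis_def)
  qed (use g in \<open>auto simp: c_def axis_def\<close>)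
  have Xsub: "?X \<subseteq> {x. \<forall>i. i \<notin> N \<longrightarrow> x$i = 0}"
    by (auto simp: X_set_def N_def)
  have star: "insert c ((\<lambda>g. c - axis g 1) ` M) \<subseteq> ?X" if "M \<subseteq> N" for M
    using that cX cgX by auto
  have adP: "aff_dim ?P = int (card N)"
  proof -
    have "aff_dim ?X \<le> int (card N)" using aff_dim_zero_outside[OF Xsub] .
    moreover have "int (card N) \<le> aff_dim ?X"
      using aff_dim_subset[OF star[of N]] aff_dim_star[of c N] by simp
    ultimately show ?thesis by (simp add: aff_dim_convex_hull)
  qed
  have valid: "\<forall>x\<in>?P. x $ f \<le> 1" for f
  proof -
    have "?P \<subseteq> {x. x $ f \<le> 1}"
    proof (rule hull_minimal)
      show "?X \<subseteq> {x. x $ f \<le> 1}" by (auto simp: X_set_def) (metis order.refl zero_le_one)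
      show "convex {x::real^('v set). x $ f \<le> 1}"
        using convex_halfspace_le[of "axis f (1::real)" 1] by (simp add: inner_axis')
    qed
    then show ?thesis by auto
  qed
  have facet: "coord_le_one_facet_defining f ?P" if f: "f \<in> N" for f
    unfolding coord_le_one_facet_defining_def
  proof (intro conjI)
    show "\<forall>x\<in>?P. x $ f \<le> 1" by (rule valid)
    let ?F = "?P \<inter> {x. x $ f = 1}"
    have cvx: "convex ?P" by (rule convex_convex_hull)
    have face: "?F face_of ?P"
      using face_of_Int_supporting_hyperplane_le[OF cvx, of "axis f (1::real)" 1] valid[of f]
      by (simp add: inner_axis')
    have st1: "c \<in> ?F" using cX f hull_subset[of ?X convex] by (auto simp: c_def)
    have st2: "c - axis g 1 \<in> ?F" if g: "g \<in> N - {f}" for g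
    proof -
      have "g \<noteq> f" using g by auto
      then have "(c - axis g 1) $ f = 1" using f by (simp add: c_def axis_def)
      then show ?thesis using cgX[of g] g hull_subset[of ?X convex] by auto
    qed
    have st: "insert c ((\<lambda>g. c - axis g 1) ` (N - {f})) \<subseteq> ?F"
      using st1 st2 by blast
    have fin: "finite N" by simp
    have "int (card (N - {f})) = int (card N) - 1"
    proof -
      have "card N \<ge> 1" using f fin card_0_eq[OF fin] by (metis empty_iff less_one not_le)
      then show ?thesis using f fin by (simp add: card_Diff_singleton of_nat_diff)
    qed
    then have lo: "int (card N) - 1 \<le> aff_dim ?F"
      using aff_dim_subset[OF st] aff_dim_star[of c "N - {f}"] by simp
    have "c - axis f 1 \<in> ?P" using cgX[OF f] hull_subset[of ?X convex] by auto
    moreover have "c - axis f 1 \<notin> ?F" by (simp add: c_def axis_def)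
    ultimately have "?F \<noteq> ?P" by blast
    then have "aff_dim ?F < aff_dim ?P" using face_of_aff_dim_lt[OF cvx face] by simp
    then have "aff_dim ?F = aff_dim ?P - 1" using lo adP by simp
    moreover have "?F \<noteq> {}" using st by auto
    ultimately show "?F facet_of ?P" using face by (simp add: facet_of_def)
  qed
  show ?thesis
    using adP facet unfolding full_dim_in_def N_def by auto
qed

end
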